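(* Every pairwise balanced lobster has a complete $\alpha$-labeling.
   Context: For a graph $G=(V,E)$ with $m$ edges, an $\alpha$-labeling with critical number $k$ is an injective $f:V\to\{0,\ldots,m\}$ with distinct edge labels $|f(u)-f(v)|$ such that every edge $uv$ satisfies $f(u)\le k<f(v)$ or $f(v)\le k<f(u)$; it is complete if $f$ is bijective. A lobster is a tree whose base (delete all degree-one vertices) is a caterpillar (a tree whose base is a path). A lobster $L$ is described by a spine, a path $(v_1,\ldots,v_r)$, and lobes $F_i$ at $v_i$ (pairwise vertex-disjoint trees meeting the spine only in $v_i$, $L$ being the union of spine and lobes), each lobe $F_i$ consisting of $v_i$, vertices adjacent to $v_i$, and further leaves attached to those vertices; a neighbour of $v_i$ in $F_i$ with no further leaves is a pendant vertex at $v_i$, and a neighbour $u$ of $v_i$ together with its $\ge1$ further leaves is a (non-pendant) branch. A two-spinal-vertex tree $G$ consisting of adjacent vertices $w_1,w_2$, where $w_1$ has $s_1\ge0$ pendant neighbours and non-pendant branches centered at $u_{11},\ldots,u_{1r}$ with $u_{1i}$ having $x_i\ge1$ leaves, and $w_2$ has $s_2\ge0$ pendant neighbours and non-pendant branches centered at $u_{21},\ldots,u_{2s}$ with $u_{2j}$ having $y_j\ge1$ leaves, is balanced if $r=s$ and (when $r>0$) for all $i=1,\ldots,r$: $x_i=y_{r-\frac{i-1}{2}}$, $y_i=x_{r-\frac{i-1}{2}}$ for odd $i$, and $x_i=x_{i/2}$, $y_i=y_{i/2}$ for even $i$. A lobster $L$ is pairwise balanced if $r$ is even and, for each odd $i\in\{1,\ldots,r-1\}$,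 the subtree consisting of $v_i,v_{i+1}$ together with the lobes $F_i,F_{i+1}$ is balanced (for a suitable indexing of its branches). *)

theory Defs
  imports Main
begin

(* Graphs: finite vertex set V and edge set E of 2-element subsets of V. *)

definition alpha_labeling :: "'a set \<Rightarrow> 'a set set \<Rightarrow> ('a \<Rightarrow> nat) \<Rightarrow> nat \<Rightarrow> bool" where
  "alpha_labeling V E f k \<longleftrightarrow>
     inj_on f V \<and> f ` V \<subseteq> {0..card E} \<and>
     (\<forall>u v u' v'. {u, v} \<in> E \<longrightarrow> {u', v'} \<in> E \<longrightarrow>
        \<bar>int (f u) - int (f v)\<bar> = \<bar>int (f u') - int (f v')\<bar> \<longrightarrow> {u, v} = {u', v'}) \<and>
     (\<forall>u v. {u, v} \<in> E \<longrightarrow> (f u \<le> k \<and> k < f v) \<or> (f v \<le> k \<and> k < f u))"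

definition complete_alpha_labeling :: "'a set \<Rightarrow> 'a set set \<Rightarrow> ('a \<Rightarrow> nat) \<Rightarrow> nat \<Rightarrow> bool" where
  "complete_alpha_labeling V E f k \<longleftrightarrow> alpha_labeling V E f k \<and> bij_betw f V {0..card E}"

(* Concrete lobster built from a description: spine vertices Sp 0, ..., Sp (r-1) (0-indexed);
   at spine vertex i there are s i pendant vertices Pd i k, and branches centred at Ce i j
   (j < length (b i)), the centre Ce i j carrying b i ! j leaves Lf i j l. *)
datatype lv = Sp nat | Pd nat nat | Ce nat nat | Lf nat nat nat

definition lob_V :: "nat \<Rightarrow> (nat \<Rightarrow> nat) \<Rightarrow> (nat \<Rightarrow> nat list) \<Rightarrow> lv set" where
  "lob_V r s b =
     {Sp i | i. i < r} \<union> {Pd i k | i k. i < r \<and> k < s i} \<union>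
     {Ce i j | i j. i < r \<and> j < length (b i)} \<union>
     {Lf i j l | i j l. i < r \<and> j < length (b i) \<and> l < b i ! j}"

definition lob_E :: "nat \<Rightarrow> (nat \<Rightarrow> nat) \<Rightarrow> (nat \<Rightarrow> nat list) \<Rightarrow> lv set set" where
  "lob_E r s b =
     {{Sp i, Sp (Suc i)} | i. Suc i < r} \<union> {{Sp i, Pd i k} | i k. i < r \<and> k < s i} \<union>
     {{Sp i, Ce i j} | i j. i < r \<and> j < length (b i)} \<union>
     {{Ce i j, Lf i j l} | i j l. i < r \<and> j < length (b i) \<and> l < b i ! j}"

definition lobster_descr :: "nat \<Rightarrow> (nat \<Rightarrow> nat) \<Rightarrow> (nat \<Rightarrow> nat list) \<Rightarrow> bool" where
  "lobster_descr r s b \<longleftrightarrow> 0 < r \<and> (\<forall>i<r. \<forall>j<length (b i). 1 \<le> b i ! j)"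

definition nth1 :: "'b list \<Rightarrow> nat \<Rightarrow> 'b" where
  "nth1 xs i = xs ! (i - 1)"

(* balanced two-spinal-vertex tree with branch-size lists x (at w1) and y (at w2);
   the numbers of pendant vertices s1, s2 are unrestricted *)
definition balanced :: "nat list \<Rightarrow> nat list \<Rightarrow> bool" where
  "balanced x y \<longleftrightarrow> length x = length y \<and>
     (\<forall>i\<in>{1..length x}.
        (odd i \<longrightarrow> nth1 x i = nth1 y (length x - (i - 1) div 2) \<and>
                   nth1 y i = nth1 x (length x - (i - 1) div 2)) \<and>
        (even i \<longrightarrow> nth1 x i = nth1 x (i div 2) \<and> nth1 y i = nth1 y (i div 2)))"

(* pairwise balanced description: r even, and for each pair of spine vertices
   (paper's v_i, v_{i+1}, i odd; here 0-indexed i even) the subtree is balanced *)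
definition pairwise_balanced_descr :: "nat \<Rightarrow> (nat \<Rightarrow> nat) \<Rightarrow> (nat \<Rightarrow> nat list) \<Rightarrow> bool" where
  "pairwise_balanced_descr r s b \<longleftrightarrow> lobster_descr r s b \<and> even r \<and>
     (\<forall>i<r. even i \<longrightarrow> balanced (b i) (b (Suc i)))"

definition pairwise_balanced_lobster :: "'a set \<Rightarrow> 'a set set \<Rightarrow> bool" where
  "pairwise_balanced_lobster V E \<longleftrightarrow>
     (\<exists>r s b \<phi>. pairwise_balanced_descr r s b \<and> bij_betw \<phi> (lob_V r s b) V \<and>
                E = (\<lambda>e. \<phi> ` e) ` lob_E r s b)"

end

theory Submission imports Defs begin

definition zc :: "nat list \<Rightarrow> nat list \<Rightarrow> nat \<Rightarrow> nat" where
  "zc x y p = (if even p then x ! (length x - 1 - p div 2) else y ! (p div 2))"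

lemma bal_ilcond:
  assumes "balanced x y"
  shows "length y = length x \<and> (\<forall>v<length x. zc x y v = y ! v) \<and>
         (\<forall>t<length x. zc x y (length x + t) = x ! (length x - 1 - t))"
proof -
  define R where "R = length x"
  have L: "length y = length x" using assms unfolding balanced_def by simp
  have B: "\<And>i. 1 \<le> i \<Longrightarrow> i \<le> R \<Longrightarrow>
        (odd i \<longrightarrow> x ! (i - 1) = y ! (R - (i - 1) div 2 - 1) \<and> y ! (i - 1) = x ! (R - (i - 1) div 2 - 1)) \<and>
        (even i \<longrightarrow> x ! (i - 1) = x ! (i div 2 - 1) \<and> y ! (i - 1) = y ! (i div 2 - 1))"
    using assms unfolding balanced_def nth1_def R_def by auto
  have A: "zc x y v = y ! v" if "v < R" for v
  proof (cases "even v")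
    case True
    then obtain t where t: "v = 2*t" by blast
    have "odd (2*t+1)" by simp
    from B[of "2*t+1"] that t have "y ! (2*t) = x ! (R - t - 1)" by simp
    then show ?thesis using t unfolding zc_def R_def[symmetric] by simp
  next
    case False
    then obtain t where t: "v = 2*t+1" by (metis oddE)
    from B[of "2*t+2"] that t have "y ! (2*t+1) = y ! t" by simp
    then show ?thesis using t unfolding zc_def R_def[symmetric] by simp
  qed
  have C: "zc x y (R + t) = x ! (R - 1 - t)" if "t < R" for t
  proof (cases "even (R+t)")
    case True
    then obtain q where q: "R + t = 2*q" by blast
    have i: "R - t = 2*(R-q)" using q that by simp
    have "even (R - t)" using i by simp
    from B[of "R-t"] that i have "x ! (R - t - 1) = x ! (R - q - 1)" by simp
    then show ?thesis using q True unfolding zc_def R_def[symmetric] by (simp add: algebra_simps)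
  next
    case False
    then obtain q where q: "R + t = 2*q+1" by (metis oddE)
    have i: "R - t = 2*(R-q) - 1" "R - q \<ge> 1" using q that by simp_all
    have o: "odd (R - t)" using i by (simp add: odd_pos)
    have d: "(R - t - 1) div 2 = R - q - 1" using q that by simp
    from B[of "R-t"] that o d have "x ! (R - t - 1) = y ! (R - (R - q - 1) - 1)" by simp
    moreover have "R - (R - q - 1) - 1 = q" using q that by simp
    ultimately show ?thesis using q False unfolding zc_def R_def[symmetric] by (simp add: algebra_simps)
  qed
  show ?thesis using L A C unfolding R_def by auto
qed


definition pV :: "nat \<Rightarrow> nat \<Rightarrow> nat \<Rightarrow> nat list \<Rightarrow> nat list \<Rightarrow> lv set" where
  "pV i s1 s2 x y = {Sp i, Sp (Suc i)} \<union> {Pd i q |q. q < s1} \<union> {Pd (Suc i) q |q. q < s2} \<union>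
     {Ce i c |c. c < length x} \<union> {Ce (Suc i) c |c. c < length y} \<union>
     {Lf i c l |c l. c < length x \<and> l < x ! c} \<union> {Lf (Suc i) c l |c l. c < length y \<and> l < y ! c}"

definition pE :: "nat \<Rightarrow> nat \<Rightarrow> nat \<Rightarrow> nat list \<Rightarrow> nat list \<Rightarrow> lv set set" where
  "pE i s1 s2 x y = {{Sp i, Sp (Suc i)}} \<union> {{Sp i, Pd i q} |q. q < s1} \<union> {{Sp (Suc i), Pd (Suc i) q} |q. q < s2} \<union>
     {{Sp i, Ce i c} |c. c < length x} \<union> {{Sp (Suc i), Ce (Suc i) c} |c. c < length y} \<union>
     {{Ce i c, Lf i c l} |c l. c < length x \<and> l < x ! c} \<union> {{Ce (Suc i) c, Lf (Suc i) c l} |c l. c < length y \<and> l < y ! c}"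

lemma locate_up:
  fixes G :: "nat \<Rightarrow> int"
  assumes "\<forall>t<R. G t \<le> G (Suc t)" "G 0 \<le> n" "n < G R"
  shows "\<exists>t<R. G t \<le> n \<and> n < G (Suc t)"
  using assms
proof (induction R)
  case 0 then show ?case by simp
next
  case (Suc R)
  show ?case
  proof (cases "n < G R")
    case True
    with Suc.IH Suc.prems obtain t where "t<R" "G t \<le> n" "n < G (Suc t)" by auto
    then show ?thesis by (intro exI[of _ t]) auto
  next
    case False
    then show ?thesis using Suc.prems by (intro exI[of _ R]) auto
  qed
qed

locale pairl =
  fixes i s1 s2 :: nat and x y :: "nat list"
  assumes len: "length y = length x"
    and zA: "\<forall>v<length x. zc x y v = y ! v"
    and zB: "\<forall>t<length x. zc x y (length x + t) = x ! (length x - 1 - t)"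
begin

definition "R = length x"
definition "a t = int (x ! (R - 1 - t))"
definition "bb t = int (y ! t)"
definition "SA n = (\<Sum>t<n. a t)"
definition "SB n = (\<Sum>t<n. bb t)"
definition "K = int s2 + int R + SA R"
definition "N = K + 1 + int s1 + int R + SB R"
definition "Mm = K + 1 + int R + SB R"
definition "Lo t = 1 + SA t + int t"
definition "Hi t = Mm - int t - SB t"
definition "Z n = (\<Sum>v<n. int (zc x y v))"

definition F :: "lv \<Rightarrow> int" where
  "F v = (case v of Sp j \<Rightarrow> if j = i then 0 else K + 1
     | Pd j q \<Rightarrow> if j = i then N - int q else K - int q
     | Ce j c \<Rightarrow> if j = i then Hi (R - 1 - c) else Lo c + a c
     | Lf j c l \<Rightarrow> if j = i then Lo (R - 1 - c) + int l else Hi c - 1 - int l)"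

lemma a_nn: "a t \<ge> 0" and bb_nn: "bb t \<ge> 0" by (simp_all add: a_def bb_def)

lemma SA_Suc: "SA (Suc n) = SA n + a n" and SB_Suc: "SB (Suc n) = SB n + bb n"
  by (simp_all add: SA_def SB_def)

lemma SA_mono: "n \<le> n' \<Longrightarrow> SA n \<le> SA n'"
  unfolding SA_def by (rule sum_mono2) (auto simp: a_nn)
lemma SB_mono: "n \<le> n' \<Longrightarrow> SB n \<le> SB n'"
  unfolding SB_def by (rule sum_mono2) (auto simp: bb_nn)

lemma Lo_Suc: "Lo (Suc t) = Lo t + a t + 1" by (simp add: Lo_def SA_Suc)
lemma Hi_Suc: "Hi (Suc t) = Hi t - bb t - 1" by (simp add: Hi_def SB_Suc)
lemma Lo_0: "Lo 0 = 1" by (simp add: Lo_def SA_def)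
lemma Hi_0: "Hi 0 = Mm" by (simp add: Hi_def SB_def)
lemma Lo_R: "Lo R = K - int s2 + 1" by (simp add: Lo_def K_def)
lemma Hi_R: "Hi R = K + 1" by (simp add: Hi_def Mm_def)
lemma N_Mm: "N = Mm + int s1" by (simp add: N_def Mm_def)

lemma Lo_lt: "t < t' \<Longrightarrow> Lo t + a t < Lo t'"
proof -
  assume "t < t'"
  then have "SA (Suc t) \<le> SA t'" by (intro SA_mono) simp
  then show ?thesis using \<open>t < t'\<close> by (simp add: Lo_def SA_Suc)
qed

lemma Hi_lt: "t < t' \<Longrightarrow> Hi t' < Hi t - bb t"
proof -
  assume "t < t'"
  then have "SB (Suc t) \<le> SB t'" by (intro SB_mono) simp
  then show ?thesis using \<open>t < t'\<close> by (simp add: Hi_def SB_Suc)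
qed

lemma Lo_ge: "Lo t \<ge> 1" using SA_mono[of 0 t] by (simp add: Lo_def SA_def)
lemma Hi_le: "Hi t \<le> Mm" using SB_mono[of 0 t] by (simp add: Hi_def SB_def)

lemma Lo_top: "t < R \<Longrightarrow> Lo t + a t \<le> K - int s2"
  using Lo_lt[of t R] Lo_R by simp
lemma Hi_bot: "t < R \<Longrightarrow> Hi t - bb t \<ge> K + 2"
  using Hi_lt[of t R] Hi_R by simp

lemma lo_eq: "Lo t + l = Lo t' + l' \<Longrightarrow> 0 \<le> l \<Longrightarrow> l \<le> a t \<Longrightarrow> 0 \<le> l' \<Longrightarrow> l' \<le> a t' \<Longrightarrow> t = t' \<and> l = l'"
  using Lo_lt[of t t'] Lo_lt[of t' t] by (cases t t' rule: linorder_cases) auto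

lemma hi_eq: "Hi t - l = Hi t' - l' \<Longrightarrow> 0 \<le> l \<Longrightarrow> l \<le> bb t \<Longrightarrow> 0 \<le> l' \<Longrightarrow> l' \<le> bb t' \<Longrightarrow> t = t' \<and> l = l'"
  using Hi_lt[of t t'] Hi_lt[of t' t] by (cases t t' rule: linorder_cases) auto

lemma a_rev: "c < R \<Longrightarrow> a (R - 1 - c) = int (x ! c)"
  by (simp add: a_def)

lemma SA_nn: "SA n \<ge> 0" using SA_mono[of 0 n] by (simp add: SA_def)
lemma SB_nn: "SB n \<ge> 0" using SB_mono[of 0 n] by (simp add: SB_def)
lemma K_ge: "K \<ge> int s2 + int R" using SA_nn by (simp add: K_def)


lemma F_simps[simp]:
  "F (Sp i) = 0" "F (Sp (Suc i)) = K + 1" "F (Pd i q) = N - int q" "F (Pd (Suc i) q) = K - int q"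
  "F (Ce i c) = Hi (R - 1 - c)" "F (Ce (Suc i) c) = Lo c + a c"
  "F (Lf i c l) = Lo (R - 1 - c) + int l" "F (Lf (Suc i) c l) = Hi c - 1 - int l"
  by (simp_all add: F_def)

lemma kind:
  assumes "v \<in> pV i s1 s2 x y"
  shows "(v = Sp i) \<or> (v = Sp (Suc i)) \<or> (\<exists>q<s1. v = Pd i q) \<or> (\<exists>q<s2. v = Pd (Suc i) q)
   \<or> (\<exists>t<R. v = Ce i (R - 1 - t) \<and> K + 2 \<le> Hi t - bb t \<and> Hi t \<le> Mm \<and> 0 \<le> bb t)
   \<or> (\<exists>t<R. v = Ce (Suc i) t \<and> 1 \<le> Lo t \<and> Lo t + a t \<le> K - int s2 \<and> 0 \<le> a t)
   \<or> (\<exists>t<R. \<exists>l. v = Lf i (R - 1 - t) l \<and> int l < a t \<and> 1 \<le> Lo t \<and> Lo t + a t \<le> K - int s2 \<and> 0 \<le> a t)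
   \<or> (\<exists>t<R. \<exists>l. v = Lf (Suc i) t l \<and> int l < bb t \<and> K + 2 \<le> Hi t - bb t \<and> Hi t \<le> Mm \<and> 0 \<le> bb t)"
proof -
  have L: "length y = R" using len R_def by simp
  have C1: "\<exists>t<R. Ce i c = Ce i (R - 1 - t) \<and> K + 2 \<le> Hi t - bb t \<and> Hi t \<le> Mm \<and> 0 \<le> bb t" if "c < R" for c
    using that Hi_bot[of "R-1-c"] Hi_le[of "R-1-c"] bb_nn by (auto intro!: exI[of _ "R - 1 - c"])
  have C2: "\<exists>t<R. \<exists>l'. Lf i c l = Lf i (R - 1 - t) l' \<and> int l' < a t \<and> 1 \<le> Lo t \<and> Lo t + a t \<le> K - int s2 \<and> 0 \<le> a t"
    if "c < R" "l < x ! c" for c l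
    using that Lo_top[of "R-1-c"] Lo_ge[of "R-1-c"] a_rev[of c] a_nn by (auto intro!: exI[of _ "R - 1 - c"])
  have C3: "\<exists>t<R. Ce (Suc i) c = Ce (Suc i) t \<and> 1 \<le> Lo t \<and> Lo t + a t \<le> K - int s2 \<and> 0 \<le> a t" if "c < R" for c
    using that Lo_top Lo_ge a_nn by auto
  have C4: "\<exists>t<R. \<exists>l'. Lf (Suc i) c l = Lf (Suc i) t l' \<and> int l' < bb t \<and> K + 2 \<le> Hi t - bb t \<and> Hi t \<le> Mm \<and> 0 \<le> bb t"
    if "c < R" "l < y ! c" for c l
    using that Hi_bot Hi_le bb_def by auto
  from assms have "v = Sp i \<or> v = Sp (Suc i) \<or> (\<exists>q<s1. v = Pd i q) \<or> (\<exists>q<s2. v = Pd (Suc i) q)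
     \<or> (\<exists>c<R. v = Ce i c) \<or> (\<exists>c<R. v = Ce (Suc i) c) \<or> (\<exists>c l. c < R \<and> l < x ! c \<and> v = Lf i c l)
     \<or> (\<exists>c l. c < R \<and> l < y ! c \<and> v = Lf (Suc i) c l)"
    unfolding pV_def using L R_def by auto
  then show ?thesis
  proof (elim disjE exE conjE)
    fix c assume "c < R" "v = Ce i c" then show ?thesis using C1[of c] by blast
  next
    fix c assume "c < R" "v = Ce (Suc i) c" then show ?thesis using C3[of c] by blast
  next
    fix c l assume "c < R" "l < x ! c" "v = Lf i c l" then show ?thesis using C2[of c l] by blast
  next
    fix c l assume "c < R" "l < y ! c" "v = Lf (Suc i) c l" then show ?thesis using C4[of c l] by blast
  qed auto
qed


lemma T1: "Hi t = Hi t' \<Longrightarrow> t = t'" using hi_eq[of t 0 t' 0] bb_nn by auto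
lemma T2: "Hi t = Hi t' - 1 - int l' \<Longrightarrow> int l' < bb t' \<Longrightarrow> False"
  using hi_eq[of t 0 t' "1 + int l'"] bb_nn by auto
lemma T3: "Hi t - 1 - int l = Hi t' - 1 - int l' \<Longrightarrow> int l < bb t \<Longrightarrow> int l' < bb t' \<Longrightarrow> t = t' \<and> l = l'"
  using hi_eq[of t "1 + int l" t' "1 + int l'"] by auto
lemma T3': "Hi t - int l = Hi t' - int l' \<Longrightarrow> int l < bb t \<Longrightarrow> int l' < bb t' \<Longrightarrow> t = t' \<and> l = l'"
  using hi_eq[of t "1 + int l" t' "1 + int l'"] by auto
lemma T4: "Lo t + a t = Lo t' + a t' \<Longrightarrow> t = t'" using lo_eq[of t "a t" t' "a t'"] a_nn by auto
lemma T5: "Lo t + a t = Lo t' + int l' \<Longrightarrow> int l' < a t' \<Longrightarrow> False"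
  using lo_eq[of t "a t" t' "int l'"] a_nn by auto
lemma T6: "Lo t + int l = Lo t' + int l' \<Longrightarrow> int l < a t \<Longrightarrow> int l' < a t' \<Longrightarrow> t = t' \<and> l = l'"
  using lo_eq[of t "int l" t' "int l'"] by auto

lemma F_inj: "inj_on F (pV i s1 s2 x y)"
proof (rule inj_onI)
  fix v w assume v: "v \<in> pV i s1 s2 x y" and w: "w \<in> pV i s1 s2 x y" and e: "F v = F w"
  have g: "0 \<le> K" "K + 1 \<le> Mm" "int s2 \<le> K" using K_ge SB_nn[of R] by (auto simp: Mm_def)
  from kind[OF v] kind[OF w] e g show "v = w"
    apply (elim disjE exE conjE)
    apply (simp_all add: N_Mm)
    apply (auto dest: T1 T2 T3 T3' T4 T5 T6 T2[OF sym] T5[OF sym])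
    done
qed


lemma Rx: "R = length x" and Ry: "R = length y" using len by (simp_all add: R_def)

lemma F_surj:
  assumes "0 \<le> n" "n \<le> N"
  shows "\<exists>v\<in>pV i s1 s2 x y. F v = n"
proof -
  have g: "0 \<le> K" "K + 1 \<le> Mm" "int s2 \<le> K" using K_ge SB_nn[of R] by (auto simp: Mm_def)
  consider "n = 0" | "1 \<le> n" "n \<le> K - int s2" | "K - int s2 < n" "n \<le> K" | "n = K + 1"
    | "K + 1 < n" "n \<le> Mm" | "Mm < n" "n \<le> N" using assms by linarith
  then show ?thesis
  proof cases
    case 1 then show ?thesis by (intro bexI[of _ "Sp i"]) (auto simp: pV_def)
  next
    case 2
    have "\<forall>t<R. Lo t \<le> Lo (Suc t)" using a_nn by (auto simp: Lo_Suc)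
    moreover have "Lo 0 \<le> n" "n < Lo R" using 2 Lo_0 Lo_R by auto
    ultimately obtain t where t: "t < R" "Lo t \<le> n" "n < Lo (Suc t)" using locate_up[of R Lo n] by blast
    show ?thesis
    proof (cases "n < Lo t + a t")
      case True
      have rt: "R - 1 - (R - 1 - t) = t" using t by simp
      have "Lf i (R - 1 - t) (nat (n - Lo t)) \<in> pV i s1 s2 x y"
        using t True unfolding pV_def by (auto simp: a_def Rx[symmetric])
      moreover have "F (Lf i (R - 1 - t) (nat (n - Lo t))) = n" using t rt by simp
      ultimately show ?thesis by blast
    next
      case False
      then have "n = Lo t + a t" using t by (simp add: Lo_Suc)
      moreover have "Ce (Suc i) t \<in> pV i s1 s2 x y" using t unfolding pV_def by (auto simp: Ry[symmetric])
      ultimately show ?thesis by (intro bexI[of _ "Ce (Suc i) t"]) auto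
    qed
  next
    case 3
    have "Pd (Suc i) (nat (K - n)) \<in> pV i s1 s2 x y" using 3 unfolding pV_def by auto
    moreover have "F (Pd (Suc i) (nat (K - n))) = n" using 3 by simp
    ultimately show ?thesis by blast
  next
    case 4 then show ?thesis by (intro bexI[of _ "Sp (Suc i)"]) (auto simp: pV_def)
  next
    case 5
    have "\<forall>t<R. (\<lambda>t. - Hi t) t \<le> (\<lambda>t. - Hi t) (Suc t)" using bb_nn by (auto simp: Hi_Suc)
    moreover have "(\<lambda>t. - Hi t) 0 \<le> - n" "- n < (\<lambda>t. - Hi t) R" using 5 Hi_0 Hi_R by auto
    ultimately obtain t where t: "t < R" "Hi (Suc t) < n" "n \<le> Hi t"
      using locate_up[of R "\<lambda>t. - Hi t" "- n"] by auto
    show ?thesis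
    proof (cases "n = Hi t")
      case True
      have rt: "R - 1 - (R - 1 - t) = t" using t by simp
      have "Ce i (R - 1 - t) \<in> pV i s1 s2 x y" using t unfolding pV_def by (auto simp: Rx[symmetric])
      moreover have "F (Ce i (R - 1 - t)) = n" using rt True by simp
      ultimately show ?thesis by blast
    next
      case False
      have "Lf (Suc i) t (nat (Hi t - 1 - n)) \<in> pV i s1 s2 x y"
        using t False unfolding pV_def by (auto simp: bb_def Ry[symmetric] Hi_Suc)
      moreover have "F (Lf (Suc i) t (nat (Hi t - 1 - n))) = n" using t False by simp
      ultimately show ?thesis by blast
    qed
  next
    case 6
    have "Pd i (nat (N - n)) \<in> pV i s1 s2 x y" using 6 N_Mm unfolding pV_def by auto
    moreover have "F (Pd i (nat (N - n))) = n" using 6 N_Mm by simp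
    ultimately show ?thesis by blast
  qed
qed

lemma F_range: "v \<in> pV i s1 s2 x y \<Longrightarrow> 0 \<le> F v \<and> F v \<le> N"
proof -
  assume v: "v \<in> pV i s1 s2 x y"
  have g: "0 \<le> K" "K + 1 \<le> Mm" "int s2 \<le> K" using K_ge SB_nn[of R] by (auto simp: Mm_def)
  from kind[OF v] g N_Mm show ?thesis by (elim disjE exE conjE) auto
qed


lemma zc_even: "zc x y (2 * t) = nat (a t)" by (simp add: zc_def a_def R_def)
lemma zc_odd: "zc x y (Suc (2 * t)) = nat (bb t)" by (simp add: zc_def bb_def)

lemma Z2: "Z (2 * t) = SA t + SB t"
proof (induction t)
  case 0 then show ?case by (simp add: Z_def SA_def SB_def)
next
  case (Suc t)
  have "Z (2 * Suc t) = Z (2 * t) + int (zc x y (2 * t)) + int (zc x y (Suc (2 * t)))"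
    by (simp add: Z_def)
  then show ?case using Suc a_nn[of t] bb_nn[of t] by (simp add: zc_even zc_odd SA_Suc SB_Suc)
qed

lemma Z2': "Z (Suc (2 * t)) = SA t + SB t + a t"
proof -
  have "Z (Suc (2 * t)) = Z (2 * t) + int (zc x y (2 * t))" by (simp add: Z_def)
  then show ?thesis using a_nn[of t] by (simp add: Z2 zc_even)
qed

lemma ZA: "n \<le> R \<Longrightarrow> Z n = SB n"
proof (induction n)
  case 0 then show ?case by (simp add: Z_def SB_def)
next
  case (Suc n)
  then have "zc x y n = y ! n" using zA by (simp add: R_def)
  then show ?case using Suc by (simp add: Z_def SB_def bb_def)
qed

lemma ZB: "n \<le> R \<Longrightarrow> Z (R + n) = SB R + SA n"
proof (induction n)
  case 0 then show ?case by (simp add: ZA SA_def)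
next
  case (Suc n)
  then have "zc x y (R + n) = x ! (R - 1 - n)" using zB by (simp add: R_def)
  then have "Z (R + Suc n) = Z (R + n) + a n" by (simp add: Z_def a_def)
  then show ?case using Suc by (simp add: SA_Suc)
qed

lemma Hi_nn: "t \<le> R \<Longrightarrow> Hi t \<ge> K + 1"
  using Hi_R Hi_lt[of t R] bb_nn[of t] by (cases "t = R") auto

lemma skip:
  assumes "u < 2 * R"
  shows "\<exists>p q. {p, q} \<in> pE i s1 s2 x y \<and> \<bar>F p - F q\<bar> = Mm - int (Suc u) - Z (Suc u)"
proof (cases "Suc u \<le> R")
  case True
  then have val: "Mm - int (Suc u) - Z (Suc u) = Hi (Suc u)" by (simp add: ZA Hi_def)
  have g: "0 \<le> K" using K_ge by simp
  show ?thesis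
  proof (cases "Suc u = R")
    case True
    then show ?thesis using val Hi_R g
      by (intro exI[of _ "Sp i"] exI[of _ "Sp (Suc i)"]) (auto simp: pE_def)
  next
    case False
    then have u: "Suc u < R" using True by simp
    have rt: "R - 1 - (R - 1 - Suc u) = Suc u" using u by simp
    have "{Sp i, Ce i (R - 1 - Suc u)} \<in> pE i s1 s2 x y" using u by (auto simp: pE_def Rx[symmetric])
    moreover have "\<bar>F (Sp i) - F (Ce i (R - 1 - Suc u))\<bar> = Hi (Suc u)" using rt Hi_nn[of "Suc u"] u g by simp
    ultimately show ?thesis unfolding val by blast
  qed
next
  case False
  define n where "n = u - R"
  have n: "Suc u = R + Suc n" "n < R" using False assms unfolding n_def by auto
  then have val: "Mm - int (Suc u) - Z (Suc u) = K - int n - SA (Suc n)"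
    using ZB[of "Suc n"] by (simp add: Mm_def)
  have "{Sp (Suc i), Ce (Suc i) n} \<in> pE i s1 s2 x y" using n by (auto simp: pE_def Ry[symmetric])
  moreover have "\<bar>F (Sp (Suc i)) - F (Ce (Suc i) n)\<bar> = K - int n - SA (Suc n)"
    using Lo_top[of n] n K_ge by (simp add: Lo_def SA_Suc)
  ultimately show ?thesis unfolding val by blast
qed


lemma pE_I:
  "{Sp i, Sp (Suc i)} \<in> pE i s1 s2 x y"
  "q < s1 \<Longrightarrow> {Sp i, Pd i q} \<in> pE i s1 s2 x y"
  "q < s2 \<Longrightarrow> {Sp (Suc i), Pd (Suc i) q} \<in> pE i s1 s2 x y"
  "c < R \<Longrightarrow> {Sp i, Ce i c} \<in> pE i s1 s2 x y"
  "c < R \<Longrightarrow> {Sp (Suc i), Ce (Suc i) c} \<in> pE i s1 s2 x y"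
  "c < R \<Longrightarrow> l < x ! c \<Longrightarrow> {Ce i c, Lf i c l} \<in> pE i s1 s2 x y"
  "c < R \<Longrightarrow> l < y ! c \<Longrightarrow> {Ce (Suc i) c, Lf (Suc i) c l} \<in> pE i s1 s2 x y"
  unfolding pE_def Un_iff mem_Collect_eq singleton_iff using Rx Ry by simp_all blast+

lemma pE_D:
  assumes "e \<in> pE i s1 s2 x y"
  shows "e = {Sp i, Sp (Suc i)} \<or> (\<exists>q. e = {Sp i, Pd i q} \<and> q < s1) \<or> (\<exists>q. e = {Sp (Suc i), Pd (Suc i) q} \<and> q < s2)
     \<or> (\<exists>c. e = {Sp i, Ce i c} \<and> c < length x) \<or> (\<exists>c. e = {Sp (Suc i), Ce (Suc i) c} \<and> c < length y)
     \<or> (\<exists>c l. e = {Ce i c, Lf i c l} \<and> c < length x \<and> l < x ! c)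
     \<or> (\<exists>c l. e = {Ce (Suc i) c, Lf (Suc i) c l} \<and> c < length y \<and> l < y ! c)"
  using assms unfolding pE_def Un_iff mem_Collect_eq singleton_iff disj_assoc by assumption

lemma pV_I:
  "Sp i \<in> pV i s1 s2 x y" "Sp (Suc i) \<in> pV i s1 s2 x y"
  "q < s1 \<Longrightarrow> Pd i q \<in> pV i s1 s2 x y"
  "q < s2 \<Longrightarrow> Pd (Suc i) q \<in> pV i s1 s2 x y"
  "c < R \<Longrightarrow> Ce i c \<in> pV i s1 s2 x y"
  "c < R \<Longrightarrow> Ce (Suc i) c \<in> pV i s1 s2 x y"
  "c < R \<Longrightarrow> l < x ! c \<Longrightarrow> Lf i c l \<in> pV i s1 s2 x y"
  "c < R \<Longrightarrow> l < y ! c \<Longrightarrow> Lf (Suc i) c l \<in> pV i s1 s2 x y"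
  unfolding pV_def Un_iff mem_Collect_eq insert_iff singleton_iff using Rx Ry by simp_all


lemma pE_lh:
  assumes "e \<in> pE i s1 s2 x y"
  shows "\<exists>u v. e = {u, v} \<and> u \<in> pV i s1 s2 x y \<and> v \<in> pV i s1 s2 x y \<and> F u \<le> K \<and> K < F v"
proof -
  have g: "0 \<le> K" "K + 1 \<le> Mm" "int s2 \<le> K" using K_ge SB_nn[of R] by (auto simp: Mm_def)
  have ce: "K < Hi (R - 1 - c)" for c using Hi_nn[of "R - 1 - c"] by simp
  have lf: "Lo (R - 1 - c) + int l \<le> K" if "c < R" "l < x ! c" for c l
    using Lo_top[of "R-1-c"] a_rev[of c] that g by simp
  have ce2: "Lo c + a c \<le> K" if "c < R" for c using Lo_top[of c] that g by simp
  have lf2: "K < Hi c - 1 - int l" if "c < R" "l < y ! c" for c l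
    using Hi_bot[of c] that by (simp add: bb_def)
  from pE_D[OF assms] show ?thesis
  proof (elim disjE exE conjE)
    assume "e = {Sp i, Sp (Suc i)}"
    then show ?thesis using g pV_I by (intro exI[of _ "Sp i"] exI[of _ "Sp (Suc i)"]) auto
  next
    fix q assume "e = {Sp i, Pd i q}" "q < s1"
    then show ?thesis using g N_Mm pV_I by (intro exI[of _ "Sp i"] exI[of _ "Pd i q"]) auto
  next
    fix q assume "e = {Sp (Suc i), Pd (Suc i) q}" "q < s2"
    then show ?thesis using g pV_I by (intro exI[of _ "Pd (Suc i) q"] exI[of _ "Sp (Suc i)"]) (auto simp: insert_commute)
  next
    fix c assume "e = {Sp i, Ce i c}" "c < length x"
    then show ?thesis using g ce[of c] pV_I Rx by (intro exI[of _ "Sp i"] exI[of _ "Ce i c"]) auto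
  next
    fix c assume "e = {Sp (Suc i), Ce (Suc i) c}" "c < length y"
    then show ?thesis using g ce2[of c] Ry pV_I by (intro exI[of _ "Ce (Suc i) c"] exI[of _ "Sp (Suc i)"]) (auto simp: insert_commute)
  next
    fix c l assume "e = {Ce i c, Lf i c l}" "c < length x" "l < x ! c"
    then show ?thesis using g ce[of c] lf[of c l] Rx pV_I
      by (intro exI[of _ "Lf i c l"] exI[of _ "Ce i c"]) (auto simp: insert_commute)
  next
    fix c l assume "e = {Ce (Suc i) c, Lf (Suc i) c l}" "c < length y" "l < y ! c"
    then show ?thesis using g ce2[of c] lf2[of c l] Ry pV_I
      by (intro exI[of _ "Ce (Suc i) c"] exI[of _ "Lf (Suc i) c l"]) auto
  qed
qed

lemma esurj:
  assumes "1 \<le> d" "d \<le> N"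
  shows "\<exists>u v. {u, v} \<in> pE i s1 s2 x y \<and> \<bar>F u - F v\<bar> = d"
proof -
  have g: "0 \<le> K" "K + 1 \<le> Mm" "int s2 \<le> K" using K_ge SB_nn[of R] by (auto simp: Mm_def)
  consider "Mm < d" | "d \<le> int s2" | "d = Mm" | "int s2 < d" "d < Mm" using assms by linarith
  then show ?thesis
  proof cases
    case 1
    have "{Sp i, Pd i (nat (N - d))} \<in> pE i s1 s2 x y" using 1 assms N_Mm by (intro pE_I) auto
    moreover have "\<bar>F (Sp i) - F (Pd i (nat (N - d)))\<bar> = d" using 1 assms by simp
    ultimately show ?thesis by blast
  next
    case 2
    have "{Sp (Suc i), Pd (Suc i) (nat (d - 1))} \<in> pE i s1 s2 x y" using 2 assms by (intro pE_I) auto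
    moreover have "\<bar>F (Sp (Suc i)) - F (Pd (Suc i) (nat (d - 1)))\<bar> = d" using 2 assms by simp
    ultimately show ?thesis by blast
  next
    case 3
    show ?thesis
    proof (cases "R = 0")
      case True
      then have "Mm = K + 1" using Hi_R Hi_0 by simp
      then show ?thesis using 3 g pE_I(1) by (intro exI[of _ "Sp i"] exI[of _ "Sp (Suc i)"]) auto
    next
      case False
      have "{Sp i, Ce i (R - 1)} \<in> pE i s1 s2 x y" using False by (intro pE_I) auto
      moreover have "\<bar>F (Sp i) - F (Ce i (R - 1))\<bar> = d" using 3 g by (simp add: Hi_0)
      ultimately show ?thesis by blast
    qed
  next
    case 4
    define G where "G t = Hi t - Lo t" for t
    have GS: "G (Suc t) = G t - a t - bb t - 2" for t by (simp add: G_def Hi_Suc Lo_Suc)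
    have "\<forall>t<R. (\<lambda>t. - G t) t \<le> (\<lambda>t. - G t) (Suc t)" using a_nn bb_nn GS by auto
    moreover have "(\<lambda>t. - G t) 0 \<le> - d" "- d < (\<lambda>t. - G t) R" using 4 Hi_0 Lo_0 Hi_R Lo_R
      by (auto simp: G_def)
    ultimately obtain t where t: "t < R" "G (Suc t) < d" "d \<le> G t"
      using locate_up[of R "\<lambda>t. - G t" "- d"] by auto
    have rt: "R - 1 - (R - 1 - t) = t" using t by simp
    have Gt: "G t = Mm - int (2 * t) - 1 - SA t - SB t" by (simp add: G_def Hi_def Lo_def)
    consider "G t - a t < d" | "d = G t - a t" | "G t - a t - bb t \<le> d" "d < G t - a t"
      | "d = G t - a t - bb t - 1" using t GS[of t] by linarith
    then show ?thesis
    proof cases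
      case 1
      define l where "l = nat (G t - d)"
      have l: "int l = G t - d" "int l < a t" using 1 t by (auto simp: l_def)
      have "{Ce i (R - 1 - t), Lf i (R - 1 - t) l} \<in> pE i s1 s2 x y"
        using t l by (intro pE_I) (auto simp: a_def)
      moreover have "\<bar>F (Ce i (R - 1 - t)) - F (Lf i (R - 1 - t) l)\<bar> = d"
        using rt l t 4 by (simp add: G_def)
      ultimately show ?thesis by blast
    next
      case 2
      have "2 * t < 2 * R" using t by simp
      from skip[OF this] obtain p q where pq: "{p, q} \<in> pE i s1 s2 x y"
        "\<bar>F p - F q\<bar> = Mm - int (Suc (2 * t)) - Z (Suc (2 * t))" by blast
      moreover have "Mm - int (Suc (2 * t)) - Z (Suc (2 * t)) = d" using 2 Gt Z2'[of t] by simp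
      ultimately show ?thesis by metis
    next
      case 3
      define l where "l = nat (G t - a t - 1 - d)"
      have l: "int l = G t - a t - 1 - d" "int l < bb t" using 3 t by (auto simp: l_def)
      have "{Ce (Suc i) t, Lf (Suc i) t l} \<in> pE i s1 s2 x y"
        using t l by (intro pE_I) (auto simp: bb_def)
      moreover have "\<bar>F (Ce (Suc i) t) - F (Lf (Suc i) t l)\<bar> = d"
        using l t 4 by (simp add: G_def)
      ultimately show ?thesis by blast
    next
      case 4
      have "Suc (2 * t) < 2 * R" using t by simp
      from skip[OF this] obtain p q where pq: "{p, q} \<in> pE i s1 s2 x y"
        "\<bar>F p - F q\<bar> = Mm - int (Suc (Suc (2 * t))) - Z (Suc (Suc (2 * t)))" by blast
      moreover have "Mm - int (Suc (Suc (2 * t))) - Z (Suc (Suc (2 * t))) = d"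
        using 4 Gt Z2[of "Suc t"] by (simp add: SA_Suc SB_Suc)
      ultimately show ?thesis by metis
    qed
  qed
qed


lemma F_img: "F ` pV i s1 s2 x y = {0..N}"
proof
  show "F ` pV i s1 s2 x y \<subseteq> {0..N}" using F_range by auto
  show "{0..N} \<subseteq> F ` pV i s1 s2 x y"
  proof
    fix n assume "n \<in> {0..N}"
    then obtain v where "v \<in> pV i s1 s2 x y" "F v = n" using F_surj[of n] by auto
    then show "n \<in> F ` pV i s1 s2 x y" by blast
  qed
qed

lemma pV_fin: "finite (pV i s1 s2 x y)"
  using finite_imageD[of F "pV i s1 s2 x y"] F_img F_inj by simp

lemma N_nn: "0 \<le> N" using K_ge SB_nn[of R] by (simp add: N_def)

lemma card_pV: "card (pV i s1 s2 x y) = nat N + 1"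
proof -
  have "card (pV i s1 s2 x y) = card (F ` pV i s1 s2 x y)" using F_inj by (simp add: card_image)
  also have "\<dots> = nat N + 1" using F_img N_nn by simp
  finally show ?thesis .
qed

lemma pE_sub: "pE i s1 s2 x y \<subseteq> Pow (pV i s1 s2 x y)"
  using pE_lh by blast

lemma pE_fin: "finite (pE i s1 s2 x y)"
  using pE_sub pV_fin by (meson finite_Pow_iff finite_subset)

fun parent :: "lv \<Rightarrow> lv" where
  "parent (Sp j) = Sp i"
| "parent (Pd j q) = Sp j"
| "parent (Ce j c) = Sp j"
| "parent (Lf j c l) = Ce j c"

lemma pE_par: "pE i s1 s2 x y \<subseteq> (\<lambda>v. {parent v, v}) ` (pV i s1 s2 x y - {Sp i})"
proof
  fix e assume e: "e \<in> pE i s1 s2 x y"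
  from pE_D[OF e] show "e \<in> (\<lambda>v. {parent v, v}) ` (pV i s1 s2 x y - {Sp i})"
  proof (elim disjE exE conjE)
    assume "e = {Sp i, Sp (Suc i)}" then show ?thesis using pV_I by (intro image_eqI[of _ _ "Sp (Suc i)"]) auto
  next
    fix q assume "e = {Sp i, Pd i q}" "q < s1" then show ?thesis using pV_I by (intro image_eqI[of _ _ "Pd i q"]) auto
  next
    fix q assume "e = {Sp (Suc i), Pd (Suc i) q}" "q < s2" then show ?thesis using pV_I by (intro image_eqI[of _ _ "Pd (Suc i) q"]) auto
  next
    fix c assume "e = {Sp i, Ce i c}" "c < length x" then show ?thesis using pV_I Rx by (intro image_eqI[of _ _ "Ce i c"]) auto
  next
    fix c assume "e = {Sp (Suc i), Ce (Suc i) c}" "c < length y" then show ?thesis using pV_I Ry by (intro image_eqI[of _ _ "Ce (Suc i) c"]) auto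
  next
    fix c l assume "e = {Ce i c, Lf i c l}" "c < length x" "l < x ! c"
    then show ?thesis using pV_I Rx by (intro image_eqI[of _ _ "Lf i c l"]) auto
  next
    fix c l assume "e = {Ce (Suc i) c, Lf (Suc i) c l}" "c < length y" "l < y ! c"
    then show ?thesis using pV_I Ry by (intro image_eqI[of _ _ "Lf (Suc i) c l"]) auto
  qed
qed

lemma card_pE_le: "card (pE i s1 s2 x y) \<le> nat N"
proof -
  have "card (pE i s1 s2 x y) \<le> card ((\<lambda>v. {parent v, v}) ` (pV i s1 s2 x y - {Sp i}))"
    using pE_par pV_fin by (intro card_mono) auto
  also have "\<dots> \<le> card (pV i s1 s2 x y - {Sp i})" using pV_fin by (intro card_image_le) auto
  also have "\<dots> = nat N" using card_pV pV_I(1) pV_fin by simp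
  finally show ?thesis .
qed

definition lab :: "lv set \<Rightarrow> int" where "lab e = Max (F ` e) - Min (F ` e)"

lemma lab2: "lab {u, v} = \<bar>F u - F v\<bar>" by (simp add: lab_def max_def min_def)

lemma lab_img: "{1..N} \<subseteq> lab ` pE i s1 s2 x y"
proof
  fix d assume "d \<in> {1..N}"
  then have "1 \<le> d" "d \<le> N" by auto
  then obtain u v where "{u, v} \<in> pE i s1 s2 x y" "\<bar>F u - F v\<bar> = d" using esurj by blast
  then show "d \<in> lab ` pE i s1 s2 x y" using lab2 by (metis image_eqI)
qed

lemma card_pE: "card (pE i s1 s2 x y) = nat N" and lab_inj: "inj_on lab (pE i s1 s2 x y)"
proof -
  have "nat N = card {1..N}" by simp
  also have "\<dots> \<le> card (lab ` pE i s1 s2 x y)" using lab_img pE_fin by (intro card_mono) auto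
  also have "\<dots> \<le> card (pE i s1 s2 x y)" using pE_fin by (rule card_image_le)
  finally have *: "nat N \<le> card (lab ` pE i s1 s2 x y)" "nat N \<le> card (pE i s1 s2 x y)"
    using \<open>card {1..N} \<le> card (lab ` pE i s1 s2 x y)\<close> by auto
  then show "card (pE i s1 s2 x y) = nat N" using card_pE_le by simp
  have "card (lab ` pE i s1 s2 x y) = card (pE i s1 s2 x y)"
    using * card_pE_le card_image_le[OF pE_fin, of lab] by simp
  then show "inj_on lab (pE i s1 s2 x y)" using pE_fin eq_card_imp_inj_on by blast
qed


lemma pair_main:
  "complete_alpha_labeling (pV i s1 s2 x y) (pE i s1 s2 x y) (\<lambda>v. nat (F v)) (nat K) \<and>
   nat (F (Sp i)) = 0 \<and> nat (F (Sp (Suc i))) = nat K + 1"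
proof -
  let ?V = "pV i s1 s2 x y" and ?E = "pE i s1 s2 x y" and ?f = "\<lambda>v. nat (F v)"
  have K0: "0 \<le> K" using K_ge by simp
  have nn: "v \<in> ?V \<Longrightarrow> int (?f v) = F v" for v using F_range by simp
  have inj: "inj_on ?f ?V"
  proof (rule inj_onI)
    fix v w assume "v \<in> ?V" "w \<in> ?V" "?f v = ?f w"
    then have "F v = F w" using nn by metis
    then show "v = w" using F_inj \<open>v \<in> ?V\<close> \<open>w \<in> ?V\<close> by (auto dest: inj_onD)
  qed
  have img: "?f ` ?V = {0..card ?E}"
  proof
    show "?f ` ?V \<subseteq> {0..card ?E}"
    proof
      fix n assume "n \<in> ?f ` ?V"
      then obtain v where "v \<in> ?V" "n = nat (F v)" by blast
      then have "F v \<le> N" using F_range by blast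
      then show "n \<in> {0..card ?E}" using \<open>n = nat (F v)\<close> card_pE by (simp add: nat_mono)
    qed
    show "{0..card ?E} \<subseteq> ?f ` ?V"
    proof
      fix n assume "n \<in> {0..card ?E}"
      then have "int n \<in> {0..N}" using card_pE N_nn by auto
      then obtain v where "v \<in> ?V" "F v = int n" using F_img by (metis imageE)
      then show "n \<in> ?f ` ?V" by (metis image_eqI nat_int)
    qed
  qed
  have endp: "{u, v} \<in> ?E \<Longrightarrow> u \<in> ?V \<and> v \<in> ?V" for u v using pE_sub by blast
  have dist: "\<forall>u v u' v'. {u, v} \<in> ?E \<longrightarrow> {u', v'} \<in> ?E \<longrightarrow>
        \<bar>int (?f u) - int (?f v)\<bar> = \<bar>int (?f u') - int (?f v')\<bar> \<longrightarrow> {u, v} = {u', v'}"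
  proof (intro allI impI)
    fix u v u' v' assume e: "{u, v} \<in> ?E" "{u', v'} \<in> ?E"
      and q: "\<bar>int (?f u) - int (?f v)\<bar> = \<bar>int (?f u') - int (?f v')\<bar>"
    have "lab {u, v} = lab {u', v'}" using q nn endp[OF e(1)] endp[OF e(2)] by (simp add: lab2)
    then show "{u, v} = {u', v'}" using lab_inj e by (auto dest: inj_onD)
  qed
  have cut: "\<forall>u v. {u, v} \<in> ?E \<longrightarrow> (?f u \<le> nat K \<and> nat K < ?f v) \<or> (?f v \<le> nat K \<and> nat K < ?f u)"
  proof (intro allI impI)
    fix u v assume e: "{u, v} \<in> ?E"
    obtain u0 v0 where uv: "{u, v} = {u0, v0}" "u0 \<in> ?V" "v0 \<in> ?V" "F u0 \<le> K" "K < F v0"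
      using pE_lh[OF e] by blast
    have "0 \<le> F u0" using F_range uv by blast
    then have c: "?f u0 \<le> nat K \<and> nat K < ?f v0" using uv K0 by auto
    from uv(1) have "(u = u0 \<and> v = v0) \<or> (u = v0 \<and> v = u0)" by (auto simp: doubleton_eq_iff)
    then show "(?f u \<le> nat K \<and> nat K < ?f v) \<or> (?f v \<le> nat K \<and> nat K < ?f u)" using c by auto
  qed
  have "complete_alpha_labeling ?V ?E ?f (nat K)"
    unfolding complete_alpha_labeling_def alpha_labeling_def bij_betw_def
    using inj img dist cut by auto
  moreover have "nat (F (Sp (Suc i))) = nat K + 1" using K0 by simp
  ultimately show ?thesis by simp
qed

lemma pE_wf: "\<forall>e\<in>pE i s1 s2 x y. \<exists>u v. e = {u, v} \<and> u \<noteq> v \<and> u \<in> pV i s1 s2 x y \<and> v \<in> pV i s1 s2 x y"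
  using pE_lh by fastforce

end
lemma edge_in:
  assumes "\<forall>e\<in>E. \<exists>u v. e = {u, v} \<and> u \<noteq> v \<and> u \<in> V \<and> v \<in> V" "{u, v} \<in> E"
  shows "u \<in> V" "v \<in> V" "u \<noteq> v"
proof -
  obtain u0 v0 where "{u, v} = {u0, v0}" "u0 \<noteq> v0" "u0 \<in> V" "v0 \<in> V" using assms by blast
  then show "u \<in> V" "v \<in> V" "u \<noteq> v" by (auto simp: doubleton_eq_iff)
qed

lemma glue:
  fixes V1 V2 :: "'a set" and E1 E2 :: "'a set set"
  assumes c1: "complete_alpha_labeling V1 E1 f1 k1" and c2: "complete_alpha_labeling V2 E2 f2 k2"
    and w1: "\<forall>e\<in>E1. \<exists>u v. e = {u, v} \<and> u \<noteq> v \<and> u \<in> V1 \<and> v \<in> V1"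
    and w2: "\<forall>e\<in>E2. \<exists>u v. e = {u, v} \<and> u \<noteq> v \<and> u \<in> V2 \<and> v \<in> V2"
    and fin1: "finite E1" and fin2: "finite E2"
    and dj: "V1 \<inter> V2 = {}"
    and a: "a \<in> V1" "f1 a = k1 + 1" and b: "b \<in> V2" "f2 b = 0" and k2: "k2 \<le> card E2"
  shows "complete_alpha_labeling (V1 \<union> V2) (E1 \<union> E2 \<union> {{a, b}})
     (\<lambda>v. if v \<in> V1 then (if f1 v \<le> k1 then f1 v else f1 v + card E2 + 1) else f2 v + k1 + 1) (k1 + k2 + 1)"
proof -
  define m1 where "m1 = card E1"
  define m2 where "m2 = card E2"
  define g where "g v = (if v \<in> V1 then (if f1 v \<le> k1 then f1 v else f1 v + m2 + 1) else f2 v + k1 + 1)" for v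
  let ?V = "V1 \<union> V2" and ?E = "E1 \<union> E2 \<union> {{a, b}}"
  have inj1: "inj_on f1 V1" and img1: "f1 ` V1 = {0..m1}"
    and dist1: "\<forall>u v u' v'. {u, v} \<in> E1 \<longrightarrow> {u', v'} \<in> E1 \<longrightarrow>
        \<bar>int (f1 u) - int (f1 v)\<bar> = \<bar>int (f1 u') - int (f1 v')\<bar> \<longrightarrow> {u, v} = {u', v'}"
    and cut1: "\<forall>u v. {u, v} \<in> E1 \<longrightarrow> (f1 u \<le> k1 \<and> k1 < f1 v) \<or> (f1 v \<le> k1 \<and> k1 < f1 u)"
    using c1 unfolding complete_alpha_labeling_def alpha_labeling_def bij_betw_def m1_def by auto
  have inj2: "inj_on f2 V2" and img2: "f2 ` V2 = {0..m2}"
    and dist2: "\<forall>u v u' v'. {u, v} \<in> E2 \<longrightarrow> {u', v'} \<in> E2 \<longrightarrow>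
        \<bar>int (f2 u) - int (f2 v)\<bar> = \<bar>int (f2 u') - int (f2 v')\<bar> \<longrightarrow> {u, v} = {u', v'}"
    and cut2: "\<forall>u v. {u, v} \<in> E2 \<longrightarrow> (f2 u \<le> k2 \<and> k2 < f2 v) \<or> (f2 v \<le> k2 \<and> k2 < f2 u)"
    using c2 unfolding complete_alpha_labeling_def alpha_labeling_def bij_betw_def m2_def by auto
  have r1: "v \<in> V1 \<Longrightarrow> f1 v \<le> m1" for v using img1 by auto
  have r2: "v \<in> V2 \<Longrightarrow> f2 v \<le> m2" for v using img2 by auto
  have k1m: "k1 + 1 \<le> m1" using r1[OF a(1)] a(2) by simp
  have bV1: "b \<notin> V1" and aV2: "a \<notin> V2" using dj a b by auto
  have nab1: "{a, b} \<notin> E1" using edge_in[OF w1, of a b] bV1 by blast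
  have nab2: "{a, b} \<notin> E2" using edge_in[OF w2, of a b] aV2 by blast
  have d12: "E1 \<inter> E2 = {}"
  proof (rule ccontr)
    assume "E1 \<inter> E2 \<noteq> {}"
    then obtain e where "e \<in> E1" "e \<in> E2" by blast
    then obtain u v where "e = {u, v}" using w1 by blast
    then show False using edge_in[OF w1, of u v] edge_in[OF w2, of u v] \<open>e \<in> E1\<close> \<open>e \<in> E2\<close> dj by blast
  qed
  have cardE: "card ?E = m1 + m2 + 1"
  proof -
    have "card (E1 \<union> E2) = m1 + m2" using d12 fin1 fin2 by (simp add: card_Un_disjoint m1_def m2_def)
    moreover have "{a, b} \<notin> E1 \<union> E2" using nab1 nab2 by blast
    ultimately show ?thesis using fin1 fin2 by simp
  qed
  have inj: "inj_on g ?V"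
  proof (rule inj_onI)
    fix v w assume v: "v \<in> ?V" and w: "w \<in> ?V" and e: "g v = g w"
    show "v = w"
    proof (cases "v \<in> V1"; cases "w \<in> V1")
      assume "v \<in> V1" "w \<in> V1"
      then have "f1 v = f1 w" using e by (auto simp: g_def split: if_splits)
      then show ?thesis using inj1 \<open>v \<in> V1\<close> \<open>w \<in> V1\<close> by (auto dest: inj_onD)
    next
      assume "v \<in> V1" "w \<notin> V1"
      then have "w \<in> V2" using w by blast
      then show ?thesis using e \<open>v \<in> V1\<close> \<open>w \<notin> V1\<close> r2[of w] by (auto simp: g_def split: if_splits)
    next
      assume "v \<notin> V1" "w \<in> V1"
      then have "v \<in> V2" using v by blast
      then show ?thesis using e \<open>w \<in> V1\<close> \<open>v \<notin> V1\<close> r2[of v] by (auto simp: g_def split: if_splits)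
    next
      assume "v \<notin> V1" "w \<notin> V1"
      then have "v \<in> V2" "w \<in> V2" "f2 v = f2 w" using v w e by (auto simp: g_def)
      then show ?thesis using inj2 by (auto dest: inj_onD)
    qed
  qed
  have img: "g ` ?V = {0..card ?E}"
  proof
    show "g ` ?V \<subseteq> {0..card ?E}"
    proof
      fix n assume "n \<in> g ` ?V"
      then obtain v where v: "v \<in> ?V" "n = g v" by blast
      show "n \<in> {0..card ?E}"
      proof (cases "v \<in> V1")
        case True then show ?thesis using r1[of v] v k1m unfolding cardE by (auto simp: g_def)
      next
        case False then have "v \<in> V2" using v by blast
        then show ?thesis using r2[of v] v k1m False unfolding cardE by (auto simp: g_def)
      qed
    qed
    show "{0..card ?E} \<subseteq> g ` ?V"
    proof
      fix n assume n: "n \<in> {0..card ?E}"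
      consider "n \<le> k1" | "k1 < n" "n \<le> k1 + 1 + m2" | "k1 + 1 + m2 < n" by linarith
      then show "n \<in> g ` ?V"
      proof cases
        case 1
        then obtain v where "v \<in> V1" "f1 v = n" using img1 k1m by (metis atLeastAtMost_iff imageE le0 le_trans le_add1)
        then show ?thesis using 1 by (intro image_eqI[of _ _ v]) (auto simp: g_def)
      next
        case 2
        then have "n - k1 - 1 \<in> f2 ` V2" using img2 by auto
        then obtain v where "v \<in> V2" "f2 v = n - k1 - 1" by (metis imageE)
        then show ?thesis using 2 dj by (intro image_eqI[of _ _ v]) (auto simp: g_def)
      next
        case 3
        then have "n - m2 - 1 \<in> f1 ` V1" using img1 n cardE by auto
        then obtain v where "v \<in> V1" "f1 v = n - m2 - 1" by (metis imageE)
        then show ?thesis using 3 by (intro image_eqI[of _ _ v]) (auto simp: g_def)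
      qed
    qed
  qed
  have lab1: "\<bar>int (g u) - int (g v)\<bar> = \<bar>int (f1 u) - int (f1 v)\<bar> + int m2 + 1 \<and> u \<in> V1 \<and> v \<in> V1
       \<and> \<bar>int (f1 u) - int (f1 v)\<bar> \<ge> 1 \<and> ((g u \<le> k1 + k2 + 1 \<and> k1 + k2 + 1 < g v) \<or> (g v \<le> k1 + k2 + 1 \<and> k1 + k2 + 1 < g u))"
    if e: "{u, v} \<in> E1" for u v
  proof -
    have uv: "u \<in> V1" "v \<in> V1" "u \<noteq> v" using edge_in[OF w1 e] by auto
    then have "f1 u \<noteq> f1 v" using inj1 by (auto dest: inj_onD)
    moreover have "(f1 u \<le> k1 \<and> k1 < f1 v) \<or> (f1 v \<le> k1 \<and> k1 < f1 u)" using cut1 e by blast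
    ultimately show ?thesis using uv k2 m2_def by (auto simp: g_def)
  qed
  have lab2: "\<bar>int (g u) - int (g v)\<bar> = \<bar>int (f2 u) - int (f2 v)\<bar> \<and> \<bar>int (f2 u) - int (f2 v)\<bar> \<le> int m2
      \<and> ((g u \<le> k1 + k2 + 1 \<and> k1 + k2 + 1 < g v) \<or> (g v \<le> k1 + k2 + 1 \<and> k1 + k2 + 1 < g u))"
    if e: "{u, v} \<in> E2" for u v
  proof -
    have uv: "u \<in> V2" "v \<in> V2" using edge_in[OF w2 e] by auto
    then have "u \<notin> V1" "v \<notin> V1" using dj by auto
    moreover have "(f2 u \<le> k2 \<and> k2 < f2 v) \<or> (f2 v \<le> k2 \<and> k2 < f2 u)" using cut2 e by blast
    ultimately show ?thesis using r2[OF uv(1)] r2[OF uv(2)] by (auto simp: g_def)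
  qed
  have lab3: "\<bar>int (g u) - int (g v)\<bar> = int m2 + 1
      \<and> ((g u \<le> k1 + k2 + 1 \<and> k1 + k2 + 1 < g v) \<or> (g v \<le> k1 + k2 + 1 \<and> k1 + k2 + 1 < g u))"
    if e: "{u, v} = {a, b}" for u v
  proof -
    have ga: "g a = k1 + 1 + m2 + 1" using a by (simp add: g_def)
    have gb: "g b = k1 + 1" using b bV1 by (simp add: g_def)
    have "(u = a \<and> v = b) \<or> (u = b \<and> v = a)" using e by (auto simp: doubleton_eq_iff)
    then show ?thesis using ga gb k2 m2_def by auto
  qed
  have dist: "\<forall>u v u' v'. {u, v} \<in> ?E \<longrightarrow> {u', v'} \<in> ?E \<longrightarrow>
        \<bar>int (g u) - int (g v)\<bar> = \<bar>int (g u') - int (g v')\<bar> \<longrightarrow> {u, v} = {u', v'}"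
  proof (intro allI impI)
    fix u v u' v' assume e: "{u, v} \<in> ?E" "{u', v'} \<in> ?E" and q: "\<bar>int (g u) - int (g v)\<bar> = \<bar>int (g u') - int (g v')\<bar>"
    have CC: "{u', v'} \<in> E1 \<or> {u', v'} \<in> E2 \<or> {u', v'} = {a, b}" using e(2) by blast
    from e consider (A) "{u, v} \<in> E1" | (B) "{u, v} \<in> E2" | (C) "{u, v} = {a, b}" by blast
    then show "{u, v} = {u', v'}"
    proof cases
      case A
      show ?thesis
      proof (cases "{u', v'} \<in> E1")
        case True
        then have "\<bar>int (f1 u) - int (f1 v)\<bar> = \<bar>int (f1 u') - int (f1 v')\<bar>" using lab1[OF A] lab1[OF True] q by simp
        then show ?thesis using dist1 A True by blast
      next
        case False
        then have "{u', v'} \<in> E2 \<or> {u', v'} = {a, b}" using CC by blast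
        then show ?thesis
        proof
          assume h: "{u', v'} \<in> E2"
          show ?thesis using lab1[OF A] lab2[OF h] q by linarith
        next
          assume h: "{u', v'} = {a, b}"
          show ?thesis using lab1[OF A] lab3[OF h] q by linarith
        qed
      qed
    next
      case B
      show ?thesis
      proof (cases "{u', v'} \<in> E2")
        case True
        then have "\<bar>int (f2 u) - int (f2 v)\<bar> = \<bar>int (f2 u') - int (f2 v')\<bar>" using lab2[OF B] lab2[OF True] q by simp
        then show ?thesis using dist2 B True by blast
      next
        case False
        then have "{u', v'} \<in> E1 \<or> {u', v'} = {a, b}" using CC by blast
        then show ?thesis
        proof
          assume h: "{u', v'} \<in> E1"
          show ?thesis using lab2[OF B] lab1[OF h] q by linarith
        next
          assume h: "{u', v'} = {a, b}"
          show ?thesis using lab2[OF B] lab3[OF h] q by linarith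
        qed
      qed
    next
      case C
      show ?thesis
      proof (cases "{u', v'} = {a, b}")
        case True then show ?thesis using C by simp
      next
        case False
        then have "{u', v'} \<in> E1 \<or> {u', v'} \<in> E2" using CC by blast
        then show ?thesis
        proof
          assume h: "{u', v'} \<in> E1"
          show ?thesis using lab3[OF C] lab1[OF h] q by linarith
        next
          assume h: "{u', v'} \<in> E2"
          show ?thesis using lab3[OF C] lab2[OF h] q by linarith
        qed
      qed
    qed
  qed
  have cut: "\<forall>u v. {u, v} \<in> ?E \<longrightarrow> (g u \<le> k1 + k2 + 1 \<and> k1 + k2 + 1 < g v) \<or> (g v \<le> k1 + k2 + 1 \<and> k1 + k2 + 1 < g u)"
    using lab1 lab2 lab3 by blast
  have "complete_alpha_labeling ?V ?E g (k1 + k2 + 1)"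
    unfolding complete_alpha_labeling_def alpha_labeling_def bij_betw_def
    using inj img dist cut by auto
  then show ?thesis unfolding g_def m2_def .
qed

lemma lobV_SS: "lob_V (Suc (Suc r)) s b = lob_V r s b \<union> pV r (s r) (s (Suc r)) (b r) (b (Suc r))"
  apply (rule set_eqI)
  apply (simp only: lob_V_def pV_def Un_iff mem_Collect_eq insert_iff singleton_iff less_Suc_eq)
  apply (simp only: ex_disj_distrib conj_disj_distribR conj_disj_distribL simp_thms ex_simps)
  apply simp
  apply (simp only: disj_ac)
  done

lemma lobE_2: "lob_E (Suc (Suc 0)) s b = pE 0 (s 0) (s (Suc 0)) (b 0) (b (Suc 0))"
  apply (rule set_eqI)
  apply (simp only: lob_E_def pE_def Un_iff mem_Collect_eq singleton_iff less_Suc_eq)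
  apply (simp only: ex_disj_distrib conj_disj_distribR conj_disj_distribL simp_thms ex_simps)
  apply simp
  done

lemma lobE_SS: "lob_E (Suc (Suc (Suc r))) s b = lob_E (Suc r) s b \<union> pE (Suc r) (s (Suc r)) (s (Suc (Suc r))) (b (Suc r)) (b (Suc (Suc r))) \<union> {{Sp r, Sp (Suc r)}}"
  apply (rule set_eqI)
  apply (simp only: lob_E_def pE_def Un_iff mem_Collect_eq singleton_iff less_Suc_eq)
  apply (simp only: ex_disj_distrib conj_disj_distribR conj_disj_distribL simp_thms ex_simps)
  apply simp
  apply (simp only: disj_ac)
  done

lemma lobV_dj: "lob_V r s b \<inter> pV r s1 s2 x y = {}"
  unfolding lob_V_def pV_def by auto

lemma lobV_0: "lob_V 0 s b = {}" by (simp add: lob_V_def)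


lemma pair_ex:
  assumes "balanced x y"
  shows "\<exists>f k. complete_alpha_labeling (pV i s1 s2 x y) (pE i s1 s2 x y) f k \<and> f (Sp i) = 0 \<and>
     f (Sp (Suc i)) = k + 1 \<and> k \<le> card (pE i s1 s2 x y) \<and> finite (pE i s1 s2 x y) \<and>
     (\<forall>e\<in>pE i s1 s2 x y. \<exists>u v. e = {u, v} \<and> u \<noteq> v \<and> u \<in> pV i s1 s2 x y \<and> v \<in> pV i s1 s2 x y)"
proof -
  interpret pairl i s1 s2 x y using bal_ilcond[OF assms] by unfold_locales auto
  have "nat K \<le> card (pE i s1 s2 x y)" using card_pE SB_nn[of R] by (simp add: N_def nat_mono)
  then show ?thesis using pair_main pE_fin pE_wf by blast
qed

lemma lob_main:
  assumes "\<forall>i<2 * Suc p. even i \<longrightarrow> balanced (b i) (b (Suc i))"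
  shows "\<exists>f k. complete_alpha_labeling (lob_V (2 * Suc p) s b) (lob_E (2 * Suc p) s b) f k \<and>
     f (Sp (Suc (2 * p))) = k + 1 \<and> finite (lob_E (2 * Suc p) s b) \<and>
     (\<forall>e\<in>lob_E (2 * Suc p) s b. \<exists>u v. e = {u, v} \<and> u \<noteq> v \<and> u \<in> lob_V (2 * Suc p) s b \<and> v \<in> lob_V (2 * Suc p) s b)"
  using assms
proof (induction p)
  case 0
  have "balanced (b 0) (b (Suc 0))" using 0 by simp
  from pair_ex[OF this, of 0 "s 0" "s (Suc 0)"] obtain f k where
    h: "complete_alpha_labeling (pV 0 (s 0) (s (Suc 0)) (b 0) (b (Suc 0))) (pE 0 (s 0) (s (Suc 0)) (b 0) (b (Suc 0))) f k"
       "f (Sp (Suc 0)) = k + 1" "finite (pE 0 (s 0) (s (Suc 0)) (b 0) (b (Suc 0)))"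
       "\<forall>e\<in>pE 0 (s 0) (s (Suc 0)) (b 0) (b (Suc 0)). \<exists>u v. e = {u, v} \<and> u \<noteq> v \<and> u \<in> pV 0 (s 0) (s (Suc 0)) (b 0) (b (Suc 0)) \<and> v \<in> pV 0 (s 0) (s (Suc 0)) (b 0) (b (Suc 0))"
    by blast
  have V: "lob_V (2 * Suc 0) s b = pV 0 (s 0) (s (Suc 0)) (b 0) (b (Suc 0))"
    using lobV_SS[of 0 s b] lobV_0 by (simp add: numeral_2_eq_2)
  have E: "lob_E (2 * Suc 0) s b = pE 0 (s 0) (s (Suc 0)) (b 0) (b (Suc 0))"
    using lobE_2 by (simp add: numeral_2_eq_2)
  have s1: "Suc (2 * 0) = Suc 0" by simp
  show ?case unfolding V E s1
  proof (intro exI[of _ f] exI[of _ k] conjI)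
  qed (fact h)+
next
  case (Suc p)
  define r where "r = Suc (2 * p)"
  have r1: "2 * Suc p = Suc r" and r2: "2 * Suc (Suc p) = Suc (Suc (Suc r))" and r3: "Suc (2 * Suc p) = Suc (Suc r)"
    by (simp_all add: r_def)
  from Suc.prems have "\<forall>i<2 * Suc p. even i \<longrightarrow> balanced (b i) (b (Suc i))" by auto
  from Suc.IH[OF this] obtain f1 k1 where
    c1: "complete_alpha_labeling (lob_V (Suc r) s b) (lob_E (Suc r) s b) f1 k1"
    and a1: "f1 (Sp r) = k1 + 1" and fin1: "finite (lob_E (Suc r) s b)"
    and w1: "\<forall>e\<in>lob_E (Suc r) s b. \<exists>u v. e = {u, v} \<and> u \<noteq> v \<and> u \<in> lob_V (Suc r) s b \<and> v \<in> lob_V (Suc r) s b"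
    unfolding r1 r_def[symmetric] by blast
  have "even (Suc r)" by (simp add: r_def)
  then have "balanced (b (Suc r)) (b (Suc (Suc r)))" using Suc.prems r2 by auto
  from pair_ex[OF this, of "Suc r" "s (Suc r)" "s (Suc (Suc r))"] obtain f2 k2 where
    c2: "complete_alpha_labeling (pV (Suc r) (s (Suc r)) (s (Suc (Suc r))) (b (Suc r)) (b (Suc (Suc r))))
      (pE (Suc r) (s (Suc r)) (s (Suc (Suc r))) (b (Suc r)) (b (Suc (Suc r)))) f2 k2"
    and b0: "f2 (Sp (Suc r)) = 0" and b1: "f2 (Sp (Suc (Suc r))) = k2 + 1"
    and k2: "k2 \<le> card (pE (Suc r) (s (Suc r)) (s (Suc (Suc r))) (b (Suc r)) (b (Suc (Suc r))))"
    and fin2: "finite (pE (Suc r) (s (Suc r)) (s (Suc (Suc r))) (b (Suc r)) (b (Suc (Suc r))))"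
    and w2: "\<forall>e\<in>pE (Suc r) (s (Suc r)) (s (Suc (Suc r))) (b (Suc r)) (b (Suc (Suc r))).
      \<exists>u v. e = {u, v} \<and> u \<noteq> v \<and> u \<in> pV (Suc r) (s (Suc r)) (s (Suc (Suc r))) (b (Suc r)) (b (Suc (Suc r)))
        \<and> v \<in> pV (Suc r) (s (Suc r)) (s (Suc (Suc r))) (b (Suc r)) (b (Suc (Suc r)))"
    by blast
  let ?V1 = "lob_V (Suc r) s b" and ?V2 = "pV (Suc r) (s (Suc r)) (s (Suc (Suc r))) (b (Suc r)) (b (Suc (Suc r)))"
  let ?E1 = "lob_E (Suc r) s b" and ?E2 = "pE (Suc r) (s (Suc r)) (s (Suc (Suc r))) (b (Suc r)) (b (Suc (Suc r)))"
  have aV: "Sp r \<in> ?V1" by (simp add: lob_V_def)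
  have bV: "Sp (Suc r) \<in> ?V2" by (simp add: pV_def)
  have cV: "Sp (Suc (Suc r)) \<in> ?V2" by (simp add: pV_def)
  have dj: "?V1 \<inter> ?V2 = {}" by (rule lobV_dj)
  have cnot: "Sp (Suc (Suc r)) \<notin> ?V1" using cV dj by blast
  define g where "g v = (if v \<in> ?V1 then (if f1 v \<le> k1 then f1 v else f1 v + card ?E2 + 1) else f2 v + k1 + 1)" for v
  have cg: "complete_alpha_labeling (?V1 \<union> ?V2) (?E1 \<union> ?E2 \<union> {{Sp r, Sp (Suc r)}}) g (k1 + k2 + 1)"
    unfolding g_def by (rule glue[OF c1 c2 w1 w2 fin1 fin2 dj aV a1 bV b0 k2])
  have VV: "lob_V (2 * Suc (Suc p)) s b = ?V1 \<union> ?V2" unfolding r2 by (rule lobV_SS)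
  have EE: "lob_E (2 * Suc (Suc p)) s b = ?E1 \<union> ?E2 \<union> {{Sp r, Sp (Suc r)}}" unfolding r2 by (rule lobE_SS)
  have gc: "g (Sp (Suc (2 * Suc p))) = (k1 + k2 + 1) + 1" unfolding r3 g_def using cnot b1 by simp
  have fin: "finite (?E1 \<union> ?E2 \<union> {{Sp r, Sp (Suc r)}})" using fin1 fin2 by simp
  have wf: "\<forall>e\<in>?E1 \<union> ?E2 \<union> {{Sp r, Sp (Suc r)}}. \<exists>u v. e = {u, v} \<and> u \<noteq> v \<and> u \<in> ?V1 \<union> ?V2 \<and> v \<in> ?V1 \<union> ?V2"
  proof
    fix e assume "e \<in> ?E1 \<union> ?E2 \<union> {{Sp r, Sp (Suc r)}}"
    then consider "e \<in> ?E1" | "e \<in> ?E2" | "e = {Sp r, Sp (Suc r)}" by blast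
    then show "\<exists>u v. e = {u, v} \<and> u \<noteq> v \<and> u \<in> ?V1 \<union> ?V2 \<and> v \<in> ?V1 \<union> ?V2"
    proof cases
      case 1 then show ?thesis using w1 by blast
    next
      case 2 then show ?thesis using w2 by blast
    next
      case 3 then show ?thesis using aV bV by (intro exI[of _ "Sp r"] exI[of _ "Sp (Suc r)"]) simp
    qed
  qed
  show ?case unfolding VV EE
  proof (intro exI[of _ g] exI[of _ "k1 + k2 + 1"] conjI)
  qed (fact cg gc fin wf)+
qed

lemma transport:
  fixes \<phi> :: "'b \<Rightarrow> 'a"
  assumes c: "complete_alpha_labeling L EL f k"
    and wf: "\<forall>e\<in>EL. \<exists>u v. e = {u, v} \<and> u \<noteq> v \<and> u \<in> L \<and> v \<in> L"
    and bij: "bij_betw \<phi> L V" and E: "E = (\<lambda>e. \<phi> ` e) ` EL"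
  shows "complete_alpha_labeling V E (\<lambda>v. f (inv_into L \<phi> v)) k"
proof -
  define \<psi> where "\<psi> = inv_into L \<phi>"
  have injphi: "inj_on \<phi> L" and imphi: "\<phi> ` L = V" using bij by (auto simp: bij_betw_def)
  have psiV: "v \<in> V \<Longrightarrow> \<psi> v \<in> L \<and> \<phi> (\<psi> v) = v" for v
    using imphi unfolding \<psi>_def by (auto intro: inv_into_into f_inv_into_f)
  have psiL: "u \<in> L \<Longrightarrow> \<psi> (\<phi> u) = u" for u using injphi unfolding \<psi>_def by simp
  have bpsi: "bij_betw \<psi> V L" unfolding \<psi>_def using bij by (rule bij_betw_inv_into)
  have inj1: "inj_on f L" and img1: "f ` L = {0..card EL}"
    and dist1: "\<forall>u v u' v'. {u, v} \<in> EL \<longrightarrow> {u', v'} \<in> EL \<longrightarrow>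
        \<bar>int (f u) - int (f v)\<bar> = \<bar>int (f u') - int (f v')\<bar> \<longrightarrow> {u, v} = {u', v'}"
    and cut1: "\<forall>u v. {u, v} \<in> EL \<longrightarrow> (f u \<le> k \<and> k < f v) \<or> (f v \<le> k \<and> k < f u)"
    using c unfolding complete_alpha_labeling_def alpha_labeling_def bij_betw_def by auto
  have ELsub: "EL \<subseteq> Pow L"
  proof
    fix e assume "e \<in> EL"
    then obtain u v where "e = {u, v}" "u \<in> L" "v \<in> L" using wf by meson
    then show "e \<in> Pow L" by simp
  qed
  have cardE: "card E = card EL"
  proof -
    have "inj_on (image \<phi>) EL" using inj_on_image_Pow[OF injphi] ELsub by (rule inj_on_subset)
    then show ?thesis unfolding E by (rule card_image)
  qed
  have key: "u \<in> V \<and> v \<in> V \<and> {\<psi> u, \<psi> v} \<in> EL" if e: "{u, v} \<in> E" for u v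
  proof -
    obtain e0 where e0: "e0 \<in> EL" "{u, v} = \<phi> ` e0" using e E by blast
    obtain u0 v0 where uv0: "e0 = {u0, v0}" "u0 \<in> L" "v0 \<in> L" using wf e0(1) by blast
    have "{u, v} = {\<phi> u0, \<phi> v0}" using e0 uv0 by simp
    then have "(u = \<phi> u0 \<and> v = \<phi> v0) \<or> (u = \<phi> v0 \<and> v = \<phi> u0)" by (auto simp: doubleton_eq_iff)
    then show ?thesis using uv0 e0 psiL imphi by (auto simp: insert_commute)
  qed
  have inj: "inj_on (\<lambda>v. f (\<psi> v)) V"
    using inj1 bpsi unfolding bij_betw_def by (auto intro: comp_inj_on[unfolded comp_def])
  have img: "(\<lambda>v. f (\<psi> v)) ` V = {0..card E}"
  proof -
    have "(\<lambda>v. f (\<psi> v)) ` V = f ` (\<psi> ` V)" by (simp add: image_image)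
    also have "\<psi> ` V = L" using bpsi by (simp add: bij_betw_def)
    finally show ?thesis using img1 cardE by simp
  qed
  have dist: "\<forall>u v u' v'. {u, v} \<in> E \<longrightarrow> {u', v'} \<in> E \<longrightarrow>
        \<bar>int (f (\<psi> u)) - int (f (\<psi> v))\<bar> = \<bar>int (f (\<psi> u')) - int (f (\<psi> v'))\<bar> \<longrightarrow> {u, v} = {u', v'}"
  proof (intro allI impI)
    fix u v u' v' assume e: "{u, v} \<in> E" "{u', v'} \<in> E"
      and q: "\<bar>int (f (\<psi> u)) - int (f (\<psi> v))\<bar> = \<bar>int (f (\<psi> u')) - int (f (\<psi> v'))\<bar>"
    have "{\<psi> u, \<psi> v} = {\<psi> u', \<psi> v'}" using dist1 key[OF e(1)] key[OF e(2)] q by blast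
    then have "\<phi> ` {\<psi> u, \<psi> v} = \<phi> ` {\<psi> u', \<psi> v'}" by simp
    then show "{u, v} = {u', v'}" using psiV key[OF e(1)] key[OF e(2)] by simp
  qed
  have cut: "\<forall>u v. {u, v} \<in> E \<longrightarrow> (f (\<psi> u) \<le> k \<and> k < f (\<psi> v)) \<or> (f (\<psi> v) \<le> k \<and> k < f (\<psi> u))"
    using key cut1 by blast
  have "complete_alpha_labeling V E (\<lambda>v. f (\<psi> v)) k"
    unfolding complete_alpha_labeling_def alpha_labeling_def bij_betw_def
    using inj img dist cut by auto
  then show ?thesis unfolding \<psi>_def .
qed

theorem corollary4p12:
  fixes V :: "'a set" and E :: "'a set set"
  assumes "pairwise_balanced_lobster V E"
  shows "\<exists>f k. complete_alpha_labeling V E f k"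
proof -
  obtain r s b \<phi> where d: "pairwise_balanced_descr r s b" and bij: "bij_betw \<phi> (lob_V r s b) V"
    and E: "E = (\<lambda>e. \<phi> ` e) ` lob_E r s b"
    using assms unfolding pairwise_balanced_lobster_def by blast
  have r0: "0 < r" "even r" and bal: "\<forall>i<r. even i \<longrightarrow> balanced (b i) (b (Suc i))"
    using d unfolding pairwise_balanced_descr_def lobster_descr_def by auto
  obtain p where p: "r = 2 * Suc p" using r0 by (metis evenE gr0_conv_Suc mult_0_right nat_0_less_mult_iff)
  from lob_main[of p b s] bal p obtain f k where
    c: "complete_alpha_labeling (lob_V r s b) (lob_E r s b) f k"
    and wf: "\<forall>e\<in>lob_E r s b. \<exists>u v. e = {u, v} \<and> u \<noteq> v \<and> u \<in> lob_V r s b \<and> v \<in> lob_V r s b"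
    by auto
  show ?thesis by (rule exI, rule exI, rule transport[OF c wf bij E])
qed

end
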